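(* Let $\Delta\ge 4$ be an integer and for positive integers $i,j$ define \[ F(i,j)=(4\Delta-6)\Bigl(\frac{1}{i}+\frac{1}{j}\Bigr)+\Delta^2-6\Delta+3+\frac{6}{\Delta}-(i-j)^2 . \] Then for every integer $i$ with $\left\lfloor \frac{\Delta+3}{2}\right\rfloor+1\le i\le \Delta-1$ we have the strict inequality \[ i\,F(i,2) > F(\Delta,\Delta). \] *)

theory Defs
  imports Complex_Main
begin

definition F :: "nat \<Rightarrow> nat \<Rightarrow> nat \<Rightarrow> real" where
  "F \<Delta> i j = (4 * real \<Delta> - 6) * (1 / real i + 1 / real j) + (real \<Delta>)^2 - 6 * real \<Delta> + 3
     + 6 / real \<Delta> - (real i - real j)^2"

end

theory Submission
  imports Defs
begin

theorem lemma4p2: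
  fixes \<Delta> i :: nat
  assumes "\<Delta> \<ge> 4"
    and "(\<Delta> + 3) div 2 + 1 \<le> i" and "i \<le> \<Delta> - 1"
  shows "real i * F \<Delta> i 2 > F \<Delta> \<Delta> \<Delta>"
proof -
  define D where "D = real \<Delta>"
  define x where "x = real i"
  have D6: "\<Delta> \<ge> 6" using assms by linarith
  have i2: "2 * i \<ge> \<Delta> + 2" using assms by linarith
  have D: "D \<ge> 6" using D6 unfolding D_def by simp
  have xl: "2 * x \<ge> D + 2" using i2 unfolding D_def x_def by simp
  have xu: "x \<le> D - 1" using assms D6 unfolding D_def x_def by simp
  have x0: "x > 0" using xl D by simp
  have rhs: "F \<Delta> \<Delta> \<Delta> = D^2 - 6*D + 11 - 6/D"
    unfolding F_def D_def[symmetric] using D by (simp add: field_simps)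
  have lhs: "real i * F \<Delta> i 2 = (4*D-6)*(1 + x/2) + x*(D^2-6*D+3) + 6*x/D - x*(x-2)^2"
    unfolding F_def D_def[symmetric] x_def[symmetric] using D x0 by (simp add: field_simps)
  have a: "x*(x-2)^2 \<le> x*(D-3)^2"
    using x0 xu xl D by (intro mult_left_mono power_mono) auto
  have b: "x*(2*D-9) \<ge> (D+2)/2*(2*D-9)"
    using xl D by (intro mult_right_mono) auto
  have c: "6*x/D > 0" using x0 D by simp
  have d: "6/D > 0" using D by simp
  have "(4*D-6)*(1 + x/2) + x*(D^2-6*D+3) - x*(D-3)^2 = 4*D - 6 + x*(2*D-9)"
    by (simp add: algebra_simps power2_eq_square)
  moreover have "(D+2)/2*(2*D-9) = D^2 - 5/2*D - 9"
    by (simp add: field_simps power2_eq_square)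
  ultimately show ?thesis unfolding lhs rhs using a b c d D by linarith
qed

end
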